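(* Let $n\in\mathbb{N}$ be fixed, let $f:[0,1]\times\mathbb{R}^2\to\mathbb{R}$ be continuous with $f(t,0,0)=0$ for all $t\in[0,1]$ and satisfying condition (P2) below, and let $h:[0,1]\to\mathbb{R}$ be continuous with $h(0)=h(1)=0$. Then the discrete boundary value problem $$-\Delta^2x(k-1)+\frac1{n^2}f\!\left(\frac kn,\,n\Delta x(k-1),\,x(k)\right)=\frac1{n^2}h\!\left(\frac kn\right),\qquad x(0)=x(n)=0,$$ has exactly one solution $x\in\mathbb{E}$ (in the weak sense described in the context).
   Context: Condition (P2): for all $s,t,w,z\in\mathbb{R}$ and all $k,l\in[0,1]$, $(s-t)\big(f(k,w,s)-f(l,z,t)\big)\ge 0$. $\Delta x(k)=x(k+1)-x(k)$, $\Delta^2x(k)=\Delta(\Delta x)(k)=x(k+2)-2x(k+1)+x(k)$. $\mathbb{E}=\{x:\{0,1,\dots,n\}\to\mathbb{R}\ :\ x(0)=x(n)=0\}$, an $n$-dimensional... (more precisely $(n-1)$-dimensional) real Hilbert space with inner product $\langle x,y\rangle_{\mathbb{E}}=\sum_{k=1}^n\Delta x(k-1)\Delta y(k-1)$. A solution of the discrete problem is an $x\in\mathbb{E}$ such that for all $y\in\mathbb{E}$: $$\sum_{k=1}^n\Delta x(k-1)\Delta y(k-1)+\frac1{n^2}\sum_{k=1}^n y(k)f\!\left(\frac kn,n\Delta x(k-1),x(k)\right)=\frac1{n^2}\sum_{k=1}^n y(k)h\!\left(\frac kn\right).$$ *)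

theory Defs
  imports "HOL-Analysis.Analysis"
begin

text \<open>Grid functions on {0,...,n} are represented as nat => real, normalised to vanish
outside {0..n}, so that elements of E correspond one-to-one to functions on {0,...,n}.\<close>

definition fdiff :: "(nat \<Rightarrow> real) \<Rightarrow> nat \<Rightarrow> real" where
  "fdiff x k = x (k + 1) - x k"

definition gridE :: "nat \<Rightarrow> (nat \<Rightarrow> real) set" where
  "gridE n = {x. x 0 = 0 \<and> x n = 0 \<and> (\<forall>k>n. x k = 0)}"

definition cond_P2 :: "(real \<Rightarrow> real \<Rightarrow> real \<Rightarrow> real) \<Rightarrow> bool" where
  "cond_P2 f \<longleftrightarrow> (\<forall>s t w z. \<forall>k\<in>{0..1}. \<forall>l\<in>{0..1}.
      (s - t) * (f k w s - f l z t) \<ge> 0)"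

definition is_weak_solution ::
  "nat \<Rightarrow> (real \<Rightarrow> real \<Rightarrow> real \<Rightarrow> real) \<Rightarrow> (real \<Rightarrow> real) \<Rightarrow> (nat \<Rightarrow> real) \<Rightarrow> bool" where
  "is_weak_solution n f h x \<longleftrightarrow> x \<in> gridE n \<and>
     (\<forall>y\<in>gridE n.
        (\<Sum>k=1..n. fdiff x (k - 1) * fdiff y (k - 1))
        + 1 / (real n)^2 * (\<Sum>k=1..n. y k * f (real k / real n) (real n * fdiff x (k - 1)) (x k))
        = 1 / (real n)^2 * (\<Sum>k=1..n. y k * h (real k / real n)))"

end

theory Submission
  imports Defs
begin

primrec shoot :: "(real\<Rightarrow>real\<Rightarrow>real\<Rightarrow>real) \<Rightarrow> (real\<Rightarrow>real) \<Rightarrow> nat \<Rightarrow> real \<Rightarrow> nat \<Rightarrow> real \<times> real" where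
  "shoot f h n a 0 = (0, a)"
| "shoot f h n a (Suc k) = (snd (shoot f h n a k),
     2 * snd (shoot f h n a k) - fst (shoot f h n a k)
     + (f (min 1 (real (Suc k) / real n)) (real n * (snd (shoot f h n a k) - fst (shoot f h n a k)))
          (snd (shoot f h n a k)) - h (real (Suc k) / real n)) / (real n)^2)"

lemma sbp:
  fixes x y :: "nat \<Rightarrow> real"
  assumes "y 0 = 0"
  shows "(\<Sum>k=1..m. (x k - x (k-1)) * (y k - y (k-1)))
       = (\<Sum>k=1..m. y k * (2*x k - x (k+1) - x (k-1))) + y m * (x (m+1) - x m)"
proof (induction m)
  case 0 then show ?case using assms by simp
next
  case (Suc m) then show ?case by (simp add: algebra_simps)
qed

lemma shoot_mono:
  assumes P2: "cond_P2 f" and lt: "a < a'"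
  shows "snd (shoot f h n a' k) - snd (shoot f h n a k) - (fst (shoot f h n a' k) - fst (shoot f h n a k)) \<ge> a' - a
       \<and> snd (shoot f h n a' k) - snd (shoot f h n a k) \<ge> real (Suc k) * (a' - a)"
proof (induction k)
  case 0 then show ?case by simp
next
  case (Suc k)
  define u where "u = fst (shoot f h n a k)"
  define v where "v = snd (shoot f h n a k)"
  define u' where "u' = fst (shoot f h n a' k)"
  define v' where "v' = snd (shoot f h n a' k)"
  define c where "c = min 1 (real (Suc k) / real n)"
  have c: "c \<in> {0..1}" unfolding c_def by auto
  have IH1: "v' - v - (u' - u) \<ge> a' - a" and IH2: "v' - v \<ge> real (Suc k) * (a' - a)"
    using Suc.IH unfolding u_def v_def u'_def v'_def by auto
  have pos: "v' - v > 0" using IH2 lt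
    by (smt (verit) mult_pos_pos of_nat_0_less_iff zero_less_Suc)
  have "(v' - v) * (f c (real n * (v' - u')) v' - f c (real n * (v - u)) v) \<ge> 0"
    using P2 c unfolding cond_P2_def by blast
  hence F: "f c (real n * (v' - u')) v' - f c (real n * (v - u)) v \<ge> 0"
    using pos by (simp add: zero_le_mult_iff)
  define D where "D = (f c (real n * (v' - u')) v' - h (real (Suc k) / real n)) / (real n)^2
                    - (f c (real n * (v - u)) v - h (real (Suc k) / real n)) / (real n)^2"
  have D: "D \<ge> 0" unfolding D_def using F by (simp add: diff_divide_distrib[symmetric])
  have e1: "snd (shoot f h n a' (Suc k)) - snd (shoot f h n a (Suc k)) = (v' - v) + (v' - v - (u' - u)) + D"
    unfolding D_def by (simp add: u_def v_def u'_def v'_def c_def algebra_simps)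
  have e2: "fst (shoot f h n a' (Suc k)) - fst (shoot f h n a (Suc k)) = v' - v"
    by (simp add: v_def v'_def)
  show ?case unfolding e1 e2 using IH1 IH2 D by (simp add: algebra_simps)
qed

lemma cont_div_const: "continuous_on S g \<Longrightarrow> continuous_on S (\<lambda>x. (g x::real) / c)"
  unfolding divide_inverse by (intro continuous_on_mult continuous_on_const)

lemma shoot_cont:
  assumes fc: "continuous_on ({0..1} \<times> UNIV \<times> UNIV) (\<lambda>(t, w, s). f t w s)"
  shows "continuous_on UNIV (\<lambda>a. shoot f h n a k)"
proof (induction k)
  case 0 then show ?case by (simp add: continuous_on_Pair continuous_on_id)
next
  case (Suc k)
  define c where "c = min 1 (real (Suc k) / real n)"
  have c: "c \<in> {0..1}" unfolding c_def by auto
  have s: "continuous_on UNIV (\<lambda>a. snd (shoot f h n a k))"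
    and fs: "continuous_on UNIV (\<lambda>a. fst (shoot f h n a k))"
    using Suc.IH by (auto intro: continuous_on_snd continuous_on_fst)
  have inner: "continuous_on UNIV (\<lambda>a. (c, real n * (snd (shoot f h n a k) - fst (shoot f h n a k)), snd (shoot f h n a k)))"
    by (intro continuous_on_Pair continuous_on_const continuous_on_mult continuous_on_diff s fs)
  have "continuous_on UNIV (\<lambda>a. (\<lambda>(t, w, s). f t w s) (c, real n * (snd (shoot f h n a k) - fst (shoot f h n a k)), snd (shoot f h n a k)))"
    by (rule continuous_on_compose2[OF fc inner]) (use c in auto)
  hence F: "continuous_on UNIV (\<lambda>a. f c (real n * (snd (shoot f h n a k) - fst (shoot f h n a k))) (snd (shoot f h n a k)))"
    by simp
  show ?case unfolding shoot.simps c_def[symmetric]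
    by (intro continuous_on_Pair continuous_on_add continuous_on_diff continuous_on_mult
        cont_div_const continuous_on_const s fs F)
qed

theorem mainTheorem2:
  fixes n :: nat
    and f :: "real \<Rightarrow> real \<Rightarrow> real \<Rightarrow> real"
    and h :: "real \<Rightarrow> real"
  assumes fc: "continuous_on ({0..1} \<times> UNIV \<times> UNIV) (\<lambda>(t, w, s). f t w s)"
    and "\<forall>t\<in>{0..1}. f t 0 0 = 0"
    and P2: "cond_P2 f"
    and "continuous_on {0..1} h"
    and "h 0 = 0" and "h 1 = 0"
  shows "\<exists>!x. is_weak_solution n f h x"
proof (rule ex_ex1I)
  show "\<exists>x. is_weak_solution n f h x"
  proof (cases "n = 0")
    case True
    have "is_weak_solution n f h (\<lambda>_. 0)" using True
      by (simp add: is_weak_solution_def gridE_def)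
    then show ?thesis by blast
  next
    case False
    hence n1: "n \<ge> 1" by simp
    define g where "g a = snd (shoot f h n a (n - 1))" for a
    have gmono: "g a' - g a \<ge> real n * (a' - a)" if "a \<le> a'" for a a'
    proof (cases "a = a'")
      case True then show ?thesis by simp
    next
      case False
      then have "a < a'" using that by simp
      from shoot_mono[OF P2 this, of h n "n - 1"] have "g a' - g a \<ge> real (Suc (n - 1)) * (a' - a)"
        unfolding g_def by simp
      then show ?thesis using n1 by simp
    qed
    have gc: "continuous_on UNIV g" unfolding g_def
      using shoot_cont[OF fc, of h n "n - 1"] by (intro continuous_on_snd)
    obtain a where ga: "g a = 0"
    proof (cases "g 0 \<le> 0")
      case True
      define b where "b = - g 0 / real n"
      have b: "b \<ge> 0" using True n1 unfolding b_def by (simp add: divide_nonpos_pos)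
      have "g b - g 0 \<ge> real n * b" using gmono[OF b] by simp
      hence "g b \<ge> 0" using n1 unfolding b_def by simp
      then obtain c where "g c = 0" using IVT'[of g 0 0 b] True b gc
        by (meson continuous_on_subset top_greatest)
      then show ?thesis using that by blast
    next
      case False
      define b where "b = - g 0 / real n"
      have b: "b \<le> 0" using False n1 unfolding b_def by simp
      have "g 0 - g b \<ge> real n * (0 - b)" using gmono[OF b] by simp
      hence "g b \<le> 0" using n1 unfolding b_def by simp
      then obtain c where "g c = 0" using IVT'[of g b 0 0] False b gc
        by (meson continuous_on_subset top_greatest linear)
      then show ?thesis using that by blast
    qed
    define x where "x k = (if k \<le> n then fst (shoot f h n a k) else 0)" for k
    have xn: "x n = 0" using ga n1 unfolding x_def g_def
      by (metis Suc_diff_1 le_refl not_one_le_zero not_gr0 shoot.simps(2) fst_conv)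
    have xE: "x \<in> gridE n" using xn unfolding gridE_def x_def by simp
    have step: "2 * x k - x (k+1) - x (k-1)
        = (h (real k / real n) - f (real k / real n) (real n * fdiff x (k - 1)) (x k)) / (real n)^2"
      if k: "1 \<le> k" "k < n" for k
    proof -
      obtain j where j: "k = Suc j" using k by (cases k) auto
      have m: "min 1 (real (Suc j) / real n) = real (Suc j) / real n" using k j by simp
      show ?thesis using k unfolding j x_def fdiff_def
        by (simp add: m algebra_simps diff_divide_distrib)
    qed
    have "is_weak_solution n f h x" unfolding is_weak_solution_def
    proof (intro conjI ballI xE)
      fix y assume y: "y \<in> gridE n"
      have y0: "y 0 = 0" and yn: "y n = 0" using y by (auto simp: gridE_def)
      have "(\<Sum>k=1..n. fdiff x (k - 1) * fdiff y (k - 1))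
           = (\<Sum>k=1..n. (x k - x (k-1)) * (y k - y (k-1)))"
        by (intro sum.cong) (auto simp: fdiff_def)
      also have "\<dots> = (\<Sum>k=1..n. y k * (2*x k - x (k+1) - x (k-1)))"
        using sbp[of y x n, OF y0] yn by simp
      also have "\<dots> = (\<Sum>k=1..n. y k * ((h (real k / real n) - f (real k / real n) (real n * fdiff x (k - 1)) (x k)) / (real n)^2))"
      proof (intro sum.cong refl)
        fix k assume "k \<in> {1..n}"
        then show "y k * (2*x k - x (k+1) - x (k-1)) = y k * ((h (real k / real n) - f (real k / real n) (real n * fdiff x (k - 1)) (x k)) / (real n)^2)"
          using step[of k] yn by (cases "k = n") auto
      qed
      also have "\<dots> = 1 / (real n)^2 * (\<Sum>k=1..n. y k * h (real k / real n))
           - 1 / (real n)^2 * (\<Sum>k=1..n. y k * f (real k / real n) (real n * fdiff x (k - 1)) (x k))"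
        by (simp add: sum_distrib_left sum_subtractf[symmetric] algebra_simps diff_divide_distrib)
      finally show "(\<Sum>k=1..n. fdiff x (k - 1) * fdiff y (k - 1))
        + 1 / (real n)^2 * (\<Sum>k=1..n. y k * f (real k / real n) (real n * fdiff x (k - 1)) (x k))
        = 1 / (real n)^2 * (\<Sum>k=1..n. y k * h (real k / real n))" by simp
    qed
    then show ?thesis by blast
  qed
next
  fix x1 x2 assume s1: "is_weak_solution n f h x1" and s2: "is_weak_solution n f h x2"
  define y where "y k = x1 k - x2 k" for k
  have E1: "x1 \<in> gridE n" and E2: "x2 \<in> gridE n" using s1 s2 by (auto simp: is_weak_solution_def)
  have yE: "y \<in> gridE n" using E1 E2 by (auto simp: gridE_def y_def)
  define F1 where "F1 k = f (real k / real n) (real n * fdiff x1 (k - 1)) (x1 k)" for k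
  define F2 where "F2 k = f (real k / real n) (real n * fdiff x2 (k - 1)) (x2 k)" for k
  have e1: "(\<Sum>k=1..n. fdiff x1 (k - 1) * fdiff y (k - 1)) + 1 / (real n)^2 * (\<Sum>k=1..n. y k * F1 k)
      = 1 / (real n)^2 * (\<Sum>k=1..n. y k * h (real k / real n))"
    using s1 yE unfolding is_weak_solution_def F1_def by blast
  have e2: "(\<Sum>k=1..n. fdiff x2 (k - 1) * fdiff y (k - 1)) + 1 / (real n)^2 * (\<Sum>k=1..n. y k * F2 k)
      = 1 / (real n)^2 * (\<Sum>k=1..n. y k * h (real k / real n))"
    using s2 yE unfolding is_weak_solution_def F2_def by blast
  have fy: "fdiff y j = fdiff x1 j - fdiff x2 j" for j by (simp add: fdiff_def y_def)
  have eq: "(\<Sum>k=1..n. (fdiff y (k - 1))^2) + 1 / (real n)^2 * (\<Sum>k=1..n. y k * (F1 k - F2 k)) = 0"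
  proof -
    have a: "(\<Sum>k=1..n. (fdiff y (k - 1))^2) = (\<Sum>k=1..n. fdiff x1 (k - 1) * fdiff y (k - 1)) - (\<Sum>k=1..n. fdiff x2 (k - 1) * fdiff y (k - 1))"
      by (simp add: sum_subtractf[symmetric] power2_eq_square fy algebra_simps)
    have b: "(\<Sum>k=1..n. y k * (F1 k - F2 k)) = (\<Sum>k=1..n. y k * F1 k) - (\<Sum>k=1..n. y k * F2 k)"
      by (simp add: sum_subtractf[symmetric] algebra_simps)
    show ?thesis unfolding a b using e1 e2 by (simp add: algebra_simps)
  qed
  have nn: "0 \<le> y k * (F1 k - F2 k)" if "k \<in> {1..n}" for k
  proof -
    have "real k / real n \<in> {0..1}" using that by auto
    then show ?thesis using P2 unfolding cond_P2_def F1_def F2_def y_def by blast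
  qed
  have S2: "0 \<le> 1 / (real n)^2 * (\<Sum>k=1..n. y k * (F1 k - F2 k))"
  proof -
    have "0 \<le> (\<Sum>k=1..n. y k * (F1 k - F2 k))" using nn by (intro sum_nonneg) blast
    then show ?thesis by simp
  qed
  have S1: "0 \<le> (\<Sum>k=1..n. (fdiff y (k - 1))^2)" by (intro sum_nonneg) auto
  have "(\<Sum>k=1..n. (fdiff y (k - 1))^2) = 0" using eq S1 S2 by linarith
  hence z: "\<forall>k\<in>{1..n}. (fdiff y (k - 1))^2 = 0"
    by (subst (asm) sum_nonneg_eq_0_iff) auto
  have "k \<le> n \<Longrightarrow> y k = 0" for k
  proof (induction k)
    case 0 then show ?case using yE by (simp add: gridE_def)
  next
    case (Suc k)
    then have "fdiff y k = 0" using z[rule_format, of "Suc k"] by simp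
    then show ?case using Suc by (simp add: fdiff_def)
  qed
  moreover have "k > n \<Longrightarrow> y k = 0" for k using yE by (simp add: gridE_def)
  ultimately have "\<And>k. y k = 0" by (meson not_le)
  then show "x1 = x2" unfolding y_def by (simp add: fun_eq_iff)
qed

end
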